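(* Assume (A3) and (A4). Let $x:[t_0,\infty)\to\mathcal H$ be any function with $x(t_0)=x_0$ and $x(t)\in\mathcal L(F,F(x_0)+a)$ for all $t\ge t_0$, where $a$ is the vector from (A3). For $t\ge t_0$ let $z(t):=\operatorname{argmin}_{z\in\mathcal H}\max_i(f_i(z)-f_i(x(t)))+\frac{\beta}{2t^p}\|z\|^2$. Then $\|z(t)\|\le R$ for all $t\ge t_0$, with $R$ the constant from (A3).
   Context: $\mathcal H$ is a real Hilbert space; $f_1,\dots,f_m:\mathcal H\to\mathbb R$ are convex, continuously differentiable with Lipschitz continuous gradients; $F=(f_1,\dots,f_m)^\top$. Weak Pareto optimal: no $x$ with $f_i(x)<f_i(x^* )$ for all $i$; $\mathcal P_w$ is the set of such points. $\mathcal L(F,b):=\{x: f_i(x)\le b_i\ \forall i\}$, $\mathcal{LP}_w(F,b):=\mathcal L(F,b)\cap\mathcal P_w$. Fixed data: $t_0>0$, $\beta>0$, $p\in(0,2]$, $x_0,v_0\in\mathcal H$. (A3): with $a\in\mathbb R^m$, $a_i:=\frac{\beta}{2t_0^p}\|x_0\|^2+\frac12\|v_0\|^2$, for every $x\in\mathcal L(F,F(x_0)+a)$ one has $\mathcal{LP}_w(F,F(x))\ne\emptyset$, and $R:=\sup_{F^*\in F(\mathcal{LP}_w(F,F(x_0)+a))}\inf_{z\in F^{-1}(\{F^*\})}\|z\|<\infty$. (A4): for every $w\in\mathbb R^m$ the set $S(w):=\operatorname{argmin}_z\max_i(f_i(z)-w_i)$ is nonempty and $w\mapsto\operatorname{proj}_{S(w)}(0)$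 is continuous. *)

theory Defs
  imports "HOL-Analysis.Analysis"
begin

text \<open>Objectives are indexed by a finite nonempty type 'i (so m = CARD('i) \<ge> 1);
  the Hilbert space is a type of class {real_inner, complete_space}.\<close>

definition Fv :: "('i \<Rightarrow> 'a \<Rightarrow> real) \<Rightarrow> 'a \<Rightarrow> ('i \<Rightarrow> real)" where
  "Fv f x = (\<lambda>i. f i x)"

definition weak_pareto :: "('i \<Rightarrow> 'a \<Rightarrow> real) \<Rightarrow> 'a set" where
  "weak_pareto f = {xs. \<not> (\<exists>x. \<forall>i. f i x < f i xs)}"

definition level_set :: "('i \<Rightarrow> 'a \<Rightarrow> real) \<Rightarrow> ('i \<Rightarrow> real) \<Rightarrow> 'a set" where
  "level_set f b = {x. \<forall>i. f i x \<le> b i}"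

definition LPw :: "('i \<Rightarrow> 'a \<Rightarrow> real) \<Rightarrow> ('i \<Rightarrow> real) \<Rightarrow> 'a set" where
  "LPw f b = level_set f b \<inter> weak_pareto f"

text \<open>Metric projection of a point onto a set (as the library's closest_point, which
  however requires heine_borel).\<close>
definition proj :: "'a::real_normed_vector set \<Rightarrow> 'a \<Rightarrow> 'a" where
  "proj S a = (SOME x. x \<in> S \<and> (\<forall>y\<in>S. dist a x \<le> dist a y))"

definition Smin :: "('i::finite \<Rightarrow> 'a \<Rightarrow> real) \<Rightarrow> ('i \<Rightarrow> real) \<Rightarrow> 'a set" where
  "Smin f w = {z. \<forall>z'. Max (range (\<lambda>i. f i z - w i)) \<le> Max (range (\<lambda>i. f i z' - w i))}"

definition Rconst :: "('i \<Rightarrow> 'a::real_normed_vector \<Rightarrow> real) \<Rightarrow> ('i \<Rightarrow> real) \<Rightarrow> real" where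
  "Rconst f b = Sup ((\<lambda>Fs. Inf {norm z | z. Fv f z = Fs}) ` (Fv f ` LPw f b))"

end

theory Submission
  imports Defs
begin

theorem mainTheorem6:
  fixes f :: "'i::finite \<Rightarrow> 'a::{real_inner,complete_space} \<Rightarrow> real"
    and t0 \<beta> p :: real and x0 v0 :: 'a and x :: "real \<Rightarrow> 'a"
  assumes t0: "t0 > 0" and beta: "\<beta> > 0" and p: "0 < p" "p \<le> 2"
    and conv: "\<And>i. convex_on UNIV (f i)"
    and smooth: "\<And>i. \<exists>g L. (\<forall>y. (f i has_derivative (\<lambda>h. inner (g y) h)) (at y))
                         \<and> (\<forall>y y'. norm (g y - g y') \<le> L * norm (y - y'))"
    and A3_ne: "\<forall>y \<in> level_set f (\<lambda>i. f i x0 + (\<beta> / (2 * t0 powr p) * (norm x0)\<^sup>2 + (norm v0)\<^sup>2 / 2)).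
                   LPw f (Fv f y) \<noteq> {}"
    and A3_bdd: "bdd_above ((\<lambda>Fs. Inf {norm z | z. Fv f z = Fs}) `
                   (Fv f ` LPw f (\<lambda>i. f i x0 + (\<beta> / (2 * t0 powr p) * (norm x0)\<^sup>2 + (norm v0)\<^sup>2 / 2))))"
    and A4_ne: "\<And>w. Smin f w \<noteq> {}"
    and A4_cont: "continuous_on UNIV (\<lambda>w. proj (Smin f w) 0)"
    and x_init: "x t0 = x0"
    and x_level: "\<And>t. t \<ge> t0 \<Longrightarrow>
        x t \<in> level_set f (\<lambda>i. f i x0 + (\<beta> / (2 * t0 powr p) * (norm x0)\<^sup>2 + (norm v0)\<^sup>2 / 2))"
  shows "\<forall>t \<ge> t0. \<forall>z.
           (\<forall>z'. Max (range (\<lambda>i. f i z - f i (x t))) + \<beta> / (2 * t powr p) * (norm z)\<^sup>2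
                 \<le> Max (range (\<lambda>i. f i z' - f i (x t))) + \<beta> / (2 * t powr p) * (norm z')\<^sup>2)
           \<longrightarrow> norm z \<le> Rconst f (\<lambda>i. f i x0 + (\<beta> / (2 * t0 powr p) * (norm x0)\<^sup>2 + (norm v0)\<^sup>2 / 2))"
proof (intro allI impI)
  fix t z
  assume tt: "t \<ge> t0"
  define b where "b = (\<lambda>i. f i x0 + (\<beta> / (2 * t0 powr p) * (norm x0)\<^sup>2 + (norm v0)\<^sup>2 / 2))"
  define c where "c = \<beta> / (2 * t powr p)"
  define M where "M = (\<lambda>u. Max (range (\<lambda>i. f i u - f i (x t))))"
  assume zmin: "\<forall>z'. Max (range (\<lambda>i. f i z - f i (x t))) + \<beta> / (2 * t powr p) * (norm z)\<^sup>2
                 \<le> Max (range (\<lambda>i. f i z' - f i (x t))) + \<beta> / (2 * t powr p) * (norm z')\<^sup>2"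
  hence zm: "\<And>u. M z + c * (norm z)\<^sup>2 \<le> M u + c * (norm u)\<^sup>2" unfolding M_def c_def by blast
  have cpos: "c > 0" unfolding c_def using beta tt t0 by auto
  have xl: "\<And>i. f i (x t) \<le> b i" using x_level[OF tt] unfolding b_def level_set_def by auto
  have Mge: "f i u - f i (x t) \<le> M u" for i u unfolding M_def by (rule Max_ge) auto
  have Mle: "M u \<le> M v" if "\<And>i. f i u \<le> f i v" for u v
  proof -
    have "\<And>i. f i u - f i (x t) \<le> M v" using that Mge[of _ v] by (smt (verit))
    thus ?thesis unfolding M_def by (subst Max_le_iff) auto
  qed
  have Mle0: "M u \<le> 0" if "\<And>i. f i u \<le> f i (x t)" for u
    unfolding M_def using that by (auto simp: Max_le_iff)
  obtain y where yL: "y \<in> LPw f b" and yM: "\<And>w. Fv f w = Fv f y \<Longrightarrow> M w \<le> M z"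
  proof (cases "M z \<le> 0")
    case True
    have "z \<in> level_set f b" unfolding level_set_def using Mge[of _ z] True xl
      by (smt (verit) mem_Collect_eq)
    then obtain y where y: "y \<in> LPw f (Fv f z)" using A3_ne unfolding b_def by blast
    have fy: "\<And>i. f i y \<le> f i z" using y unfolding LPw_def level_set_def Fv_def by auto
    show ?thesis
    proof
      show "y \<in> LPw f b" using y fy True Mge[of _ z] xl
        unfolding LPw_def level_set_def Fv_def by (auto intro: order_trans) (smt (verit))+
      fix w assume "Fv f w = Fv f y"
      hence "\<And>i. f i w = f i y" unfolding Fv_def by metis
      thus "M w \<le> M z" using fy by (intro Mle) auto
    qed
  next
    case False
    have "x t \<in> level_set f b" using x_level[OF tt] unfolding b_def .
    then obtain y where y: "y \<in> LPw f (Fv f (x t))" using A3_ne unfolding b_def by blast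
    have fy: "\<And>i. f i y \<le> f i (x t)" using y unfolding LPw_def level_set_def Fv_def by auto
    show ?thesis
    proof
      show "y \<in> LPw f b" using y fy xl
        unfolding LPw_def level_set_def Fv_def by (auto intro: order_trans)
      fix w assume "Fv f w = Fv f y"
      hence "\<And>i. f i w = f i y" unfolding Fv_def by metis
      hence "M w \<le> 0" using fy by (intro Mle0) auto
      thus "M w \<le> M z" using False by linarith
    qed
  qed
  have nz: "norm z \<le> norm w" if "Fv f w = Fv f y" for w
  proof -
    have "c * (norm z)\<^sup>2 \<le> c * (norm w)\<^sup>2" using zm[of w] yM[OF that] by linarith
    hence "(norm z)\<^sup>2 \<le> (norm w)\<^sup>2" using cpos by simp
    thus ?thesis by (simp add: power2_le_iff_abs_le)
  qed
  have "norm z \<le> Inf {norm w | w. Fv f w = Fv f y}"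
    by (rule cInf_greatest) (use nz in auto)
  also have "\<dots> \<le> Rconst f b" unfolding Rconst_def
    by (rule cSUP_upper) (use yL A3_bdd in \<open>auto simp: b_def\<close>)
  finally show "norm z \<le> Rconst f (\<lambda>i. f i x0 + (\<beta> / (2 * t0 powr p) * (norm x0)\<^sup>2 + (norm v0)\<^sup>2 / 2))"
    unfolding b_def .
qed

end
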